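(* Let $A\in\mathbb{C}^{r\times n}$, $\vec v\in\mathbb{C}^r$, $0<\nu\le1$, $\mu>0$, $\gamma>0$, and let \[ \mathcal D=\{\vec x\in\mathbb{C}^n:\ |\|\vec x\|_2-\nu|\le\gamma,\ \|A\vec x-\vec v\|_2\le\gamma,\ \|\vec x\|_\infty\le\mu+\gamma\}. \] If $\mathcal D$ is nonempty, then there is $\vec x\in\mathcal D$ that can be written as $\vec x=\vec u+\vec s$, where $\vec u$ lies in the span of the complex conjugates of the rows of $A$ (i.e. the range of $A^\dagger$) and $\vec s$ has at most $1/\mu^2+1$ nonzero entries.
   Context: $A^\dagger$ is the conjugate transpose of $A$; $\|\cdot\|_\infty$ is the maximum absolute value of entries. *)

theory Defs
  imports "HOL-Analysis.Analysis"
begin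

definition conj_transpose :: "complex ^ 'n ^ 'r \<Rightarrow> complex ^ 'r ^ 'n" where
  "conj_transpose A = (\<chi> i j. cnj (A $ j $ i))"

definition linf_norm :: "complex ^ 'n \<Rightarrow> real" where
  "linf_norm x = Max (range (\<lambda>i. cmod (x $ i)))"

definition Dset :: "complex ^ 'n ^ 'r \<Rightarrow> complex ^ 'r \<Rightarrow> real \<Rightarrow> real \<Rightarrow> real \<Rightarrow> (complex ^ 'n) set" where
  "Dset A v \<nu> \<mu> \<gamma> = {x. \<bar>norm x - \<nu>\<bar> \<le> \<gamma> \<and> norm (A *v x - v) \<le> \<gamma> \<and> linf_norm x \<le> \<mu> + \<gamma>}"

end

theory Submission
  imports Defs
begin

lemma cinner: "inner (a::complex) b = Re (a * cnj b)"
  by (simp add: inner_complex_def)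

lemma adj: "inner q (conj_transpose A *v l) = inner (A *v q) (l :: complex ^ 'r)"
  for A :: "complex ^ 'n ^ 'r"
proof -
  have 1: "inner q (conj_transpose A *v l) = Re (\<Sum>k\<in>UNIV. \<Sum>j\<in>UNIV. q$k * A$j$k * cnj (l$j))"
    unfolding inner_vec_def cinner matrix_vector_mult_def conj_transpose_def
    by (simp add: Re_sum sum_distrib_left mult_ac)
  have 2: "(\<Sum>k\<in>UNIV. \<Sum>j\<in>UNIV. q$k * A$j$k * cnj (l$j)) = (\<Sum>j\<in>UNIV. (A *v q)$j * cnj (l$j))"
    by (subst sum.swap) (simp add: matrix_vector_mult_def sum_distrib_left sum_distrib_right mult_ac)
  have 3: "Re (\<Sum>j\<in>UNIV. (A *v q)$j * cnj (l$j)) = inner (A *v q) l"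
    by (simp only: inner_vec_def cinner Re_sum)
  show ?thesis using 1 2 3 by simp
qed

definition RT :: "complex ^ 'n ^ 'r \<Rightarrow> 'n set \<Rightarrow> (complex ^ 'n) set" where
  "RT A T = {conj_transpose A *v l + s | l s. \<forall>i. i \<notin> T \<longrightarrow> s$i = 0}"

definition VT :: "complex ^ 'n ^ 'r \<Rightarrow> 'n set \<Rightarrow> (complex ^ 'n) set" where
  "VT A T = {z. A *v z = 0 \<and> (\<forall>i\<in>T. z$i = 0)}"

lemma RT_subspace: "subspace (RT A T)"
  unfolding subspace_def RT_def
proof (intro conjI ballI allI)
  show "0 \<in> {conj_transpose A *v l + s |l s. \<forall>i. i \<notin> T \<longrightarrow> s $ i = 0}"
    by (rule CollectI, rule exI[of _ 0], rule exI[of _ 0]) simp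
next
  fix x y assume "x \<in> {conj_transpose A *v l + s |l s. \<forall>i. i \<notin> T \<longrightarrow> s $ i = 0}"
    "y \<in> {conj_transpose A *v l + s |l s. \<forall>i. i \<notin> T \<longrightarrow> s $ i = 0}"
  then obtain l1 s1 l2 s2 where "x = conj_transpose A *v l1 + s1" "\<forall>i. i \<notin> T \<longrightarrow> s1 $ i = 0"
    "y = conj_transpose A *v l2 + s2" "\<forall>i. i \<notin> T \<longrightarrow> s2 $ i = 0" by blast
  then show "x + y \<in> {conj_transpose A *v l + s |l s. \<forall>i. i \<notin> T \<longrightarrow> s $ i = 0}"
    by (intro CollectI exI[of _ "l1 + l2"] exI[of _ "s1 + s2"])
       (simp add: matrix_vector_right_distrib algebra_simps)
next
  fix c :: real and x assume "x \<in> {conj_transpose A *v l + s |l s. \<forall>i. i \<notin> T \<longrightarrow> s $ i = 0}"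
  then obtain l1 s1 where "x = conj_transpose A *v l1 + s1" "\<forall>i. i \<notin> T \<longrightarrow> s1 $ i = 0" by blast
  then show "c *\<^sub>R x \<in> {conj_transpose A *v l + s |l s. \<forall>i. i \<notin> T \<longrightarrow> s $ i = 0}"
    by (intro CollectI exI[of _ "c *\<^sub>R l1"] exI[of _ "c *\<^sub>R s1"])
       (simp add: linear_cmul[OF matrix_vector_mul_linear] scaleR_add_right)
qed

lemma VT_subspace: "subspace (VT A T)"
  unfolding subspace_def VT_def
  by (auto simp: matrix_vector_right_distrib linear_cmul[OF matrix_vector_mul_linear])

lemma RT_orth_VT:
  assumes "p \<in> RT A T" "z \<in> VT A T" shows "inner p z = 0"
proof -
  obtain l s where p: "p = conj_transpose A *v l + s" and s: "\<forall>i. i \<notin> T \<longrightarrow> s$i = 0"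
    using assms(1) unfolding RT_def by blast
  have z: "A *v z = 0" "\<forall>i\<in>T. z$i = 0" using assms(2) unfolding VT_def by auto
  have "inner s z = 0" unfolding inner_vec_def
    by (rule sum.neutral) (metis s z(2) inner_zero_left inner_zero_right)
  moreover have "inner (conj_transpose A *v l) z = 0"
    using adj[of z A l] z(1) by (simp add: inner_commute)
  ultimately show ?thesis by (simp add: p inner_add_left)
qed

lemma orth_RT_in_VT:
  fixes A :: "complex ^ 'n ^ 'r"
  assumes "\<And>w. w \<in> RT A T \<Longrightarrow> inner q w = 0" shows "q \<in> VT A T"
proof -
  have "conj_transpose A *v (A *v q) \<in> RT A T"
    unfolding RT_def by (rule CollectI, rule exI[of _ "A *v q"], rule exI[of _ 0]) simp
  then have "inner (A *v q) (A *v q) = 0" using assms adj[of q A "A *v q"] by simp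
  then have 1: "A *v q = 0" by simp
  have 2: "q$i = 0" if "i \<in> T" for i
  proof -
    have "axis i 1 \<in> RT A T" unfolding RT_def
      using that by (intro CollectI exI[of _ 0] exI[of _ "axis i 1"]) (auto simp: axis_def)
    moreover have "axis i \<i> \<in> RT A T" unfolding RT_def
      using that by (intro CollectI exI[of _ 0] exI[of _ "axis i \<i>"]) (auto simp: axis_def)
    ultimately have "inner q (axis i 1) = 0" "inner q (axis i \<i>) = 0" using assms by auto
    then show ?thesis by (simp add: inner_axis cinner complex_eq_iff)
  qed
  show ?thesis using 1 2 unfolding VT_def by auto
qed

lemma orth_VT_in_RT:
  fixes A :: "complex ^ 'n ^ 'r"
  assumes "\<And>z. z \<in> VT A T \<Longrightarrow> inner p z = 0" shows "p \<in> RT A T"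
proof -
  obtain r q where r: "r \<in> span (RT A T)" and q: "\<And>w. w \<in> span (RT A T) \<Longrightarrow> orthogonal q w"
    and pq: "p = r + q"
    using orthogonal_subspace_decomp_exists[of "RT A T" p] by metis
  have rr: "r \<in> RT A T" using r RT_subspace span_eq_iff by blast
  have "q \<in> VT A T"
    by (rule orth_RT_in_VT) (use q span_base in \<open>auto simp: orthogonal_def\<close>)
  then have "inner p q = 0" using assms by blast
  moreover have "inner r q = 0" using q[OF r] by (simp add: orthogonal_def inner_commute)
  ultimately have "inner q q = 0" by (simp add: pq inner_add_left)
  then show ?thesis using pq rr by simp
qed


lemma linf_ge: "cmod (x$i) \<le> linf_norm x"
  unfolding linf_norm_def by (rule Max_ge) auto

lemma linf_le: "(\<And>i. cmod (x$i) \<le> c) \<Longrightarrow> linf_norm x \<le> c"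
  unfolding linf_norm_def by (rule Max.boundedI) auto

lemma norm_sq_vec: "(norm x)^2 = (\<Sum>i\<in>UNIV. (cmod (x$i))^2)" for x :: "complex ^ 'n"
  unfolding norm_vec_def L2_set_def by (simp add: sum_nonneg)

lemma norm_add_sq_orth: "inner a b = 0 \<Longrightarrow> (norm (a + b))^2 = (norm a)^2 + (norm (b::'a::real_inner))^2"
  by (simp add: power2_norm_eq_inner inner_add_left inner_add_right inner_commute)

lemma norm_add_sq: "(norm (a + b))^2 = (norm a)^2 + 2 * inner a b + (norm (b::'a::real_inner))^2"
  by (simp add: power2_norm_eq_inner inner_add_left inner_add_right inner_commute)

lemma card_bound:
  fixes k :: real
  assumes "0 < \<nu>" "\<nu> \<le> 1" "0 < \<mu>" "0 < \<gamma>" "0 \<le> k" "k * (\<mu> + \<gamma>)^2 \<le> (\<nu> + \<gamma>)^2"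
    and kint: "k = real n"
  shows "k \<le> 1 / \<mu>^2"
proof (cases "\<mu> \<le> 1")
  case True
  have a: "(\<nu> + \<gamma>) * \<mu> \<le> \<mu> + \<gamma>"
  proof -
    have "(\<nu> + \<gamma>) * \<mu> \<le> (1 + \<gamma>) * \<mu>" using assms by (intro mult_right_mono) auto
    also have "\<dots> \<le> \<mu> + \<gamma>" using True assms by (simp add: algebra_simps mult_left_le)
    finally show ?thesis .
  qed
  have "((\<nu> + \<gamma>) * \<mu>)^2 \<le> (\<mu> + \<gamma>)^2"
    using a assms by (intro power_mono) auto
  moreover have "k * (\<mu> + \<gamma>)^2 * \<mu>^2 \<le> (\<nu> + \<gamma>)^2 * \<mu>^2"
    using assms(6) by (intro mult_right_mono) auto
  moreover have "(\<nu> + \<gamma>)^2 * \<mu>^2 = ((\<nu> + \<gamma>) * \<mu>)^2" by (simp add: power_mult_distrib)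
  ultimately have "(k * \<mu>^2) * (\<mu> + \<gamma>)^2 \<le> 1 * (\<mu> + \<gamma>)^2" by (simp add: mult_ac)
  then have "k * \<mu>^2 \<le> 1" by (rule mult_right_le_imp_le) (use assms in simp)
  then show ?thesis using assms by (simp add: field_simps)
next
  case False
  have "\<nu> + \<gamma> < \<mu> + \<gamma>" using False assms by auto
  then have "(\<nu> + \<gamma>)^2 < (\<mu> + \<gamma>)^2" using assms by (intro power_strict_mono) auto
  then have "k * (\<mu> + \<gamma>)^2 < 1 * (\<mu> + \<gamma>)^2" using assms(6) by simp
  then have "k < 1" by (rule mult_right_less_imp_less) simp
  then have "k = 0" using kint by simp
  then show ?thesis by simp
qed

lemma div_mul_pos: "(X::real) > 0 \<Longrightarrow> d / X * X = d" by simp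

lemma RT_mono: "T \<subseteq> T' \<Longrightarrow> RT A T \<subseteq> RT A T'"
  unfolding RT_def by blast

theorem lemma6p5:
  fixes A :: "complex ^ 'n ^ 'r" and v :: "complex ^ 'r" and \<nu> \<mu> \<gamma> :: real
  assumes "0 < \<nu>" and "\<nu> \<le> 1" and "0 < \<mu>" and "0 < \<gamma>"
    and "Dset A v \<nu> \<mu> \<gamma> \<noteq> {}"
  shows "\<exists>x \<in> Dset A v \<nu> \<mu> \<gamma>. \<exists>u s. x = u + s \<and> u \<in> range (\<lambda>y. conj_transpose A *v y)
           \<and> real (card {i. s $ i \<noteq> 0}) \<le> 1 / \<mu>\<^sup>2 + 1"
proof -
  obtain x0 where x0: "x0 \<in> Dset A v \<nu> \<mu> \<gamma>" using assms(5) by blast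
  define c where "c = \<mu> + \<gamma>"
  have cpos: "c > 0" using assms c_def by auto
  define K where "K = {y. A *v y = A *v x0 \<and> (\<forall>i. cmod (y$i) \<le> c)}"
  have x0K: "x0 \<in> K" and x0n: "norm x0 \<le> \<nu> + \<gamma>"
    using x0 linf_ge[of x0] unfolding K_def Dset_def c_def by (auto intro: order_trans)
  have inD: "y \<in> Dset A v \<nu> \<mu> \<gamma>" if "y \<in> K" "\<nu> - \<gamma> \<le> norm y" "norm y \<le> \<nu> + \<gamma>" for y
    using that x0 linf_le[of y c] unfolding K_def Dset_def c_def by auto
  define Q where "Q = {y \<in> K. norm y \<le> \<nu> + \<gamma>}"
  define sat where "sat y = {i. cmod (y$i) = c}" for y :: "complex ^ 'n"
  have fin: "finite ((\<lambda>y. card (sat y)) ` Q)"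
    by (rule finite_subset[of _ "{..CARD('n)}"]) (auto intro: card_mono)
  have Qne: "(\<lambda>y. card (sat y)) ` Q \<noteq> {}" using x0K x0n Q_def by auto
  obtain y where yQ: "y \<in> Q" and ym: "card (sat y) = Max ((\<lambda>y. card (sat y)) ` Q)"
    using Max_in[OF fin Qne] by auto
  define S where "S = sat y"
  have maxc: "card (sat y') \<le> card S" if "y' \<in> Q" for y'
    using Max_ge[OF fin] that ym S_def by auto
  have yK: "y \<in> K" and ny: "norm y \<le> \<nu> + \<gamma>" using yQ Q_def by auto
  have E: "cmod (y'$i) < c" if "y' \<in> K" "norm y' \<le> \<nu> + \<gamma>" "\<forall>i\<in>S. y'$i = y$i" "i \<notin> S" for y' i
  proof -
    have sub: "S \<subseteq> sat y'" using that(3) unfolding S_def sat_def by auto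
    have "card (sat y') \<le> card S" using maxc that(1,2) Q_def by auto
    moreover have "card S \<le> card (sat y')" using sub by (intro card_mono) auto
    ultimately have "sat y' = S" using sub by (intro card_subset_eq[symmetric]) auto
    then have "cmod (y'$i) \<noteq> c" using that(4) sat_def by auto
    moreover have "cmod (y'$i) \<le> c" using that(1) K_def by auto
    ultimately show ?thesis by simp
  qed
  have cardS: "real (card S) \<le> 1 / \<mu>^2"
  proof -
    have "real (card S) * c^2 = (\<Sum>i\<in>S. (cmod (y$i))^2)" unfolding S_def sat_def by simp
    also have "\<dots> \<le> (\<Sum>i\<in>UNIV. (cmod (y$i))^2)" by (rule sum_mono2) auto
    also have "\<dots> = (norm y)^2" by (simp add: norm_sq_vec)
    also have "\<dots> \<le> (\<nu> + \<gamma>)^2" using ny by (intro power_mono) auto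
    finally show ?thesis using assms c_def by (intro card_bound[where n="card S"]) auto
  qed
  have final: "?thesis" if xD: "x \<in> Dset A v \<nu> \<mu> \<gamma>" and xR: "x \<in> RT A T" and cT: "card T \<le> card S + 1" for x T
  proof -
    obtain l s where x: "x = conj_transpose A *v l + s" and s: "\<forall>i. i \<notin> T \<longrightarrow> s$i = 0"
      using xR unfolding RT_def by blast
    have "card {i. s$i \<noteq> 0} \<le> card T" using s by (intro card_mono) auto
    then have "real (card {i. s$i \<noteq> 0}) \<le> 1 / \<mu>^2 + 1" using cT cardS by linarith
    then show ?thesis using xD x by blast
  qed
  define V where "V = VT A S"
  have Vsub: "subspace V" unfolding V_def by (rule VT_subspace)
  show ?thesis
  proof (cases "V = {0}")
    case True
    have "x0 \<in> RT A S" by (rule orth_VT_in_RT) (use True V_def in auto)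
    then show ?thesis using final[OF x0] by simp
  next
    case False
    define C where "C = {y' \<in> K. y' - y \<in> V}"
    have "closed K"
    proof -
      have "K = {y. A *v y = A *v x0} \<inter> (\<Inter>i. {y. cmod (y$i) \<le> c})" unfolding K_def by auto
      moreover have "closed {y. A *v y = A *v x0}"
        by (intro closed_Collect_eq continuous_intros linear_continuous_on) auto
      moreover have "closed {y::complex^'n. cmod (y$i) \<le> c}" for i
        by (intro closed_Collect_le continuous_intros)
      ultimately show ?thesis by auto
    qed
    moreover have "closed {y'. y' - y \<in> V}"
    proof -
      have "{y'. y' - y \<in> V} = (\<lambda>y'. y' - y) -` V" by auto
      moreover have "closed ((\<lambda>y'. y' - y) -` V)"
        by (rule continuous_closed_vimage[OF closed_subspace[OF Vsub]]) (intro continuous_intros)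
      ultimately show ?thesis by simp
    qed
    ultimately have "closed C" unfolding C_def by (simp add: Collect_conj_eq closed_Int)
    moreover have "bounded C"
    proof -
      have "norm y' \<le> norm ((\<chi> i. complex_of_real c) :: complex ^ 'n)" if "y' \<in> C" for y'
        using that cpos unfolding C_def K_def by (intro norm_le_componentwise_cart) auto
      then show ?thesis unfolding bounded_iff by blast
    qed
    ultimately have "compact C" by (simp add: compact_eq_bounded_closed)
    moreover have "y \<in> C" unfolding C_def using yK subspace_0[OF Vsub] by auto
    ultimately obtain ym where ymC: "ym \<in> C" and ymmin: "\<And>y'. y' \<in> C \<Longrightarrow> norm ym \<le> norm y'"
      using continuous_attains_inf[of C norm] continuous_on_norm_id by blast
    have ymK: "ym \<in> K" and ymV: "ym - y \<in> V" using ymC C_def by auto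
    have ymS: "\<forall>i\<in>S. ym$i = y$i"
    proof
      fix i assume "i \<in> S"
      then have "(ym - y)$i = 0" using ymV unfolding V_def VT_def by auto
      then show "ym$i = y$i" by simp
    qed
    have nym: "norm ym \<le> \<nu> + \<gamma>" using ymmin[OF \<open>y \<in> C\<close>] ny by simp
    have strict: "cmod (ym$i) < c" if "i \<notin> S" for i using E[OF ymK nym ymS that] .
    have orth: "inner ym z = 0" if zV: "z \<in> V" for z
    proof -
      define \<delta> where "\<delta> = Min (insert 1 ((\<lambda>i. c - cmod (ym$i)) ` (- S)))"
      have dpos: "\<delta> > 0" unfolding \<delta>_def using strict by (subst Min_gr_iff) auto
      have dle: "\<delta> \<le> c - cmod (ym$i)" if "i \<notin> S" for i
        unfolding \<delta>_def using that by (intro Min_le) auto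
      have zS: "\<forall>i\<in>S. z$i = 0" and Az: "A *v z = 0" using zV unfolding V_def VT_def by auto
      have pert: "norm ym \<le> norm (ym + t *\<^sub>R z)" if "\<bar>t\<bar> * norm z \<le> \<delta>" for t
      proof (rule ymmin)
        have "A *v (ym + t *\<^sub>R z) = A *v ym"
          using Az by (simp add: matrix_vector_right_distrib linear_cmul[OF matrix_vector_mul_linear])
        moreover have "cmod ((ym + t *\<^sub>R z)$i) \<le> c" for i
        proof (cases "i \<in> S")
          case True then show ?thesis using zS ymK K_def by auto
        next
          case False
          have "cmod ((ym + t *\<^sub>R z)$i) \<le> cmod (ym$i) + \<bar>t\<bar> * cmod (z$i)"
            by (simp add: norm_triangle_ineq[THEN order_trans] norm_scaleR)
          also have "\<dots> \<le> cmod (ym$i) + \<bar>t\<bar> * norm z"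
            by (intro add_left_mono mult_left_mono) (auto simp: Finite_Cartesian_Product.norm_nth_le)
          also have "\<dots> \<le> c" using dle[OF False] that by linarith
          finally show ?thesis .
        qed
        moreover have "(ym + t *\<^sub>R z) - y \<in> V"
          using subspace_add[OF Vsub ymV subspace_mul[OF Vsub zV, of t]] by (simp add: algebra_simps)
        ultimately show "ym + t *\<^sub>R z \<in> C" using ymK unfolding C_def K_def by auto
      qed
      show ?thesis
      proof (rule ccontr)
        define p where "p = inner ym z"
        assume "inner ym z \<noteq> 0"
        then have p0: "p \<noteq> 0" using p_def by simp
        define N where "N = (norm z)^2"
        define \<epsilon> where "\<epsilon> = min (\<delta> / ((\<bar>p\<bar> + 1) * (norm z + 1))) (1 / (N + 1))"
        have N0: "N \<ge> 0" unfolding N_def by simp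
        have pz: "0 < (\<bar>p\<bar> + 1) * (norm z + 1)"
          using norm_ge_zero[of z] abs_ge_zero[of p] by (intro mult_pos_pos) linarith+
        have epos: "\<epsilon> > 0" using dpos N0 pz unfolding \<epsilon>_def by (auto intro!: divide_pos_pos)
        define t where "t = - \<epsilon> * p"
        have "\<bar>t\<bar> * norm z \<le> \<delta>"
        proof -
          have "\<bar>t\<bar> * norm z = \<epsilon> * (\<bar>p\<bar> * norm z)" using epos by (simp add: t_def abs_mult)
          also have "\<dots> \<le> \<delta> / ((\<bar>p\<bar> + 1) * (norm z + 1)) * ((\<bar>p\<bar> + 1) * (norm z + 1))"
          proof (rule mult_mono)
            show "\<epsilon> \<le> \<delta> / ((\<bar>p\<bar> + 1) * (norm z + 1))" unfolding \<epsilon>_def by simp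
            show "\<bar>p\<bar> * norm z \<le> (\<bar>p\<bar> + 1) * (norm z + 1)" by (simp add: algebra_simps)
            show "0 \<le> \<delta> / ((\<bar>p\<bar> + 1) * (norm z + 1))" using dpos pz by simp
          qed simp
          also have "\<dots> = \<delta>" by (rule div_mul_pos[OF pz])
          finally show ?thesis .
        qed
        from pert[OF this] have "(norm ym)^2 \<le> (norm (ym + t *\<^sub>R z))^2"
          by (intro power_mono) auto
        then have "0 \<le> 2 * t * p + t^2 * N"
          by (simp add: norm_add_sq N_def p_def power_mult_distrib)
        then have "0 \<le> \<epsilon> * p^2 * (\<epsilon> * N - 2)"
          by (simp add: t_def power2_eq_square algebra_simps)
        moreover have "\<epsilon> * N < 2"
        proof -
          have "\<epsilon> * N \<le> 1 / (N + 1) * N" using N_def by (intro mult_right_mono) (auto simp: \<epsilon>_def)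
          also have "\<dots> < 2" using N0 by (simp add: field_simps)
          finally show ?thesis .
        qed
        moreover have "\<epsilon> * p^2 > 0" using epos p0 by simp
        ultimately show False by (simp add: zero_le_mult_iff)
      qed
    qed
    have ymR: "ym \<in> RT A S" by (rule orth_VT_in_RT) (use orth V_def in auto)
    show ?thesis
    proof (cases "\<nu> - \<gamma> \<le> norm ym")
      case True
      show ?thesis by (rule final[OF inD[OF ymK True nym] ymR]) simp
    next
      case False
      have ymlow: "norm ym < \<nu> - \<gamma>" using False by simp
      obtain z0 where z0V: "z0 \<in> V" and z0ne: "z0 \<noteq> 0"
        using False \<open>V \<noteq> {0}\<close> subspace_0[OF Vsub] by blast
      obtain j where j: "z0$j \<noteq> 0" using z0ne by (metis vec_eq_iff zero_index)
      have jS: "j \<notin> S" using z0V j unfolding V_def VT_def by auto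
      define e where "e = axis j (z0$j)"
      obtain r q where r: "r \<in> span (RT A S)" and q: "\<And>w. w \<in> span (RT A S) \<Longrightarrow> orthogonal q w"
        and erq: "e = r + q"
        using orthogonal_subspace_decomp_exists[of "RT A S" e] by metis
      have rR: "r \<in> RT A S" using r RT_subspace span_eq_iff by blast
      have qV: "q \<in> V" unfolding V_def
        by (rule orth_RT_in_VT) (use q span_base in \<open>auto simp: orthogonal_def\<close>)
      have qne: "q \<noteq> 0"
      proof
        assume "q = 0"
        then have "e \<in> RT A S" using erq rR by simp
        then have "inner e z0 = 0" using RT_orth_VT z0V V_def by blast
        moreover have "inner e z0 = inner (z0$j) (z0$j)" unfolding e_def by (simp add: inner_axis')
        ultimately show False using j by simp
      qed
      have qR: "q \<in> RT A (insert j S)"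
      proof -
        obtain l s where rl: "r = conj_transpose A *v l + s" and s: "\<forall>i. i \<notin> S \<longrightarrow> s$i = 0"
          using rR unfolding RT_def by blast
        have "q = conj_transpose A *v (- l) + (e - s)"
        proof -
          have "conj_transpose A *v (- l) = - (conj_transpose A *v l)"
            by (simp add: vec_eq_iff matrix_vector_mult_def sum_negf)
          then show ?thesis using erq rl by (simp add: algebra_simps)
        qed
        moreover have "\<forall>i. i \<notin> insert j S \<longrightarrow> (e - s)$i = 0" using s by (auto simp: e_def axis_def)
        ultimately show ?thesis unfolding RT_def by blast
      qed
      define \<rho> where "\<rho> = sqrt ((\<nu> - \<gamma>)^2 - (norm ym)^2)"
      have h: "(norm ym)^2 \<le> (\<nu> - \<gamma>)^2" by (rule power_mono) (use ymlow in auto)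
      have rho_sq: "\<rho>^2 = (\<nu> - \<gamma>)^2 - (norm ym)^2"
        unfolding \<rho>_def by (intro real_sqrt_pow2) (use h in linarith)
      have rho0: "\<rho> \<ge> 0" unfolding \<rho>_def using h by simp
      define w where "w = (\<rho> / norm q) *\<^sub>R q"
      have wV: "w \<in> V" unfolding w_def by (rule subspace_mul[OF Vsub qV])
      have wR: "w \<in> RT A (insert j S)" unfolding w_def by (rule subspace_mul[OF RT_subspace qR])
      have nw: "norm w = \<rho>" using qne rho0 by (simp add: w_def)
      have ow: "inner ym w = 0" using orth[OF wV] .
      have wS: "\<forall>i\<in>S. w$i = 0" and Aw: "A *v w = 0" using wV unfolding V_def VT_def by auto
      define P where "P t = ym + t *\<^sub>R w" for t :: real
      have PS: "\<forall>i\<in>S. P t $ i = y$i" for t using wS ymS by (simp add: P_def)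
      have PA: "A *v P t = A *v x0" for t
        using Aw ymK K_def by (simp add: P_def matrix_vector_right_distrib linear_cmul[OF matrix_vector_mul_linear])
      have Pn2: "(norm (P t))^2 = (norm ym)^2 + t^2 * \<rho>^2" for t
        using norm_add_sq_orth[of ym "t *\<^sub>R w"] ow nw by (simp add: P_def power_mult_distrib)
      have Pn: "norm (P t) \<le> \<nu> + \<gamma>" if "t \<in> {0..1}" for t
      proof -
        have "t^2 * \<rho>^2 \<le> 1 * \<rho>^2" using that by (intro mult_right_mono) (auto simp: power_le_one)
        then have "(norm (P t))^2 \<le> (\<nu> - \<gamma>)^2" using Pn2 rho_sq by simp
        then have "norm (P t) \<le> \<nu> - \<gamma>"
          by (rule power2_le_imp_le) (use ymlow norm_ge_zero[of ym] in linarith)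
        then show ?thesis using assms by simp
      qed
      define Tset where "Tset = {t \<in> {0..1::real}. P t \<in> K}"
      have Teq1: "Tset = {0..1} \<inter> P -` {z. \<forall>i. cmod (z$i) \<le> c}"
        unfolding Tset_def K_def using PA by auto
      have Teq2: "Tset = {0..1} \<inter> P -` (\<Inter>i\<in>-S. {z. cmod (z$i) < c})"
      proof -
        have "P t \<in> K \<longleftrightarrow> (\<forall>i\<in>-S. cmod (P t $ i) < c)" if "t \<in> {0..1}" for t
        proof
          assume "P t \<in> K" then show "\<forall>i\<in>-S. cmod (P t $ i) < c"
            using E[OF _ Pn[OF that] PS] by auto
        next
          assume a: "\<forall>i\<in>-S. cmod (P t $ i) < c"
          have "cmod (P t $ i) \<le> c" for i
            using a PS yK K_def by (cases "i \<in> S") (auto simp: less_imp_le)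
          then show "P t \<in> K" using PA K_def by auto
        qed
        then show ?thesis unfolding Tset_def by auto
      qed
      have Pc: "continuous_on {0..1} P" unfolding P_def by (intro continuous_intros)
      have cl: "closedin (top_of_set {0..1}) Tset"
        unfolding Teq1
        by (intro continuous_closedin_preimage Pc closed_Collect_all closed_Collect_le continuous_intros)
      have op: "openin (top_of_set {0..1}) Tset"
        unfolding Teq2
        by (intro continuous_openin_preimage_gen Pc open_INT ballI open_Collect_less continuous_intros) auto
      have T0: "0 \<in> Tset" unfolding Tset_def P_def using ymK by simp
      have "Tset = {} \<or> Tset = {0..1}"
        using connected_clopen[THEN iffD1, OF connected_Icc[of "0::real" 1], rule_format, of Tset] op cl
        by blast
      then have "Tset = {0..1}" using T0 by blast
      then have "(1::real) \<in> Tset" by simp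
      then have P1K: "P 1 \<in> K" unfolding Tset_def by blast
      have "(norm (P 1))^2 = (\<nu> - \<gamma>)^2" using Pn2[of 1] rho_sq by simp
      moreover have nvg: "0 \<le> \<nu> - \<gamma>" using ymlow norm_ge_zero[of ym] by linarith
      ultimately have nP1: "norm (P 1) = \<nu> - \<gamma>"
        using power2_eq_imp_eq[of "norm (P 1)" "\<nu> - \<gamma>"] by simp
      have "P 1 \<in> RT A (insert j S)"
        unfolding P_def using subspace_add[OF RT_subspace RT_mono[of S "insert j S" A, THEN subsetD, OF _ ymR] wR]
        by auto
      moreover have "card (insert j S) \<le> card S + 1" by (simp add: card_insert_if)
      ultimately show ?thesis using final inD[OF P1K] nP1 Pn[of 1] by auto
    qed
  qed
qed

end
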